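(* Let $m\ge 2$, $\widetilde m\ge 1$, and let $\ell_1=\lfloor (m+\widetilde m)/2\rfloor$, $\ell_2=\lceil (m+\widetilde m)/2\rceil$. Let $\mathcal{T}^1=(t^1_i)_{i\in\mathbb{Z}}$ be strictly increasing and let $\mathcal{T}^0=(t^0_i)_{i\in\mathbb{Z}}$ with $t^0_i=t^1_{2i}$. Set $V_0=S_{m,\mathcal{T}^0}$, $V_1=S_{m,\mathcal{T}^1}$. For each $k$ let $$\Xi_k=\big(t^0_{k+1-\ell_1},t^0_{k+2-\ell_1},\dots,t^0_k,\;t^1_{2k+1},\;t^0_{k+1},\dots,t^0_{k+\ell_2}\big)$$ (a strictly increasing sequence of $m+\widetilde m+1$ knots), let $N^{\Xi_k}_{m+\widetilde m}$ be the B-spline of order $m+\widetilde m$ with knots $\Xi_k$, and define the wavelet $\psi_k=\alpha_k\,\frac{d^{\widetilde m}}{dt^{\widetilde m}}N^{\Xi_k}_{m+\widetilde m}$ with a constant $\alpha_k\neq 0$. Then: (1) For each $k$ there are $\sigma_k\in V_0$ and $\gamma_k\in\mathbb{R}$, $\gamma_k\ne 0$, such that $\psi_k(t)=\sigma_k(t)+\gamma_k\,(t-t^1_{2k+1})_+^{m-1}$ for all $t\in\mathbb{R}$. (2) Let $s_1\in V_1$ be compactly supported and suppose $s_1=s_0+\sum_k d_k\psi_k$ (finite sum) with $s_0\in V_0$ and $d_k\in\mathbb{R}$. Write $s_1(t)=\sum_{i\in\mathbb{Z}}a_i\,(t-t^1_i)_+^{m-1}$ (truncated power representation). Then for every $k$,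 $$d_k=\frac{a_{2k+1}}{\gamma_k},$$ where $a_{2k+1}$ equals $\frac{1}{(m-1)!}$ times the jump of $s_1^{(m-1)}$ at $t^1_{2k+1}$ and $\gamma_k$ equals $\frac{1}{(m-1)!}$ times the jump of $\psi_k^{(m-1)}$ at $t^1_{2k+1}$.
   Context: For a strictly increasing knot sequence $\mathcal{T}=(t_i)_{i\in\mathbb{Z}}$ and an integer $m\ge 2$, the spline space of order $m$ is $S_{m,\mathcal{T}}=\{f\in C^{m-2}(\mathbb{R}): f|_{(t_i,t_{i+1}]}\text{ is a polynomial of degree}<m \text{ for all } i\}$. For a finite strictly increasing knot sequence $\xi_0<\xi_1<\dots<\xi_{r}$, the B-spline of order $r$ with these knots is the (up to normalization unique) nonzero piecewise polynomial of degree $<r$ with breakpoints $\xi_i$, in $C^{r-2}(\mathbb{R})$, supported on $[\xi_0,\xi_r]$ (normalized, e.g., so that B-splines form a partition of unity; the normalization is absorbed in $\alpha_k$). The truncated power is $(t)_+^{j}=\chi_{(0,\infty)}(t)\,t^j$. The jump of a piecewise constant function $g$ at $\tau$ means $g(\tau+)-g(\tau-)$. *)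

theory Defs
  imports "HOL-Analysis.Analysis" "HOL-Computational_Algebra.Polynomial"
begin

definition C_k :: "nat \<Rightarrow> (real \<Rightarrow> real) \<Rightarrow> bool" where
  "C_k n f \<longleftrightarrow> (\<forall>j<n. \<forall>x. ((deriv ^^ j) f) differentiable (at x))
                 \<and> continuous_on UNIV ((deriv ^^ n) f)"

definition poly_on :: "nat \<Rightarrow> real set \<Rightarrow> (real \<Rightarrow> real) \<Rightarrow> bool" where
  "poly_on m S f \<longleftrightarrow> (\<exists>p :: real poly. degree p < m \<and> (\<forall>x\<in>S. f x = poly p x))"

definition spline_space :: "nat \<Rightarrow> (int \<Rightarrow> real) \<Rightarrow> (real \<Rightarrow> real) set" where
  "spline_space m T = {f. C_k (m - 2) f \<and> (\<forall>i. poly_on m {T i<..T (i+1)} f)}"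

definition is_bspline :: "nat \<Rightarrow> (nat \<Rightarrow> real) \<Rightarrow> (real \<Rightarrow> real) \<Rightarrow> bool" where
  "is_bspline r xi N \<longleftrightarrow> (\<exists>x. N x \<noteq> 0) \<and> C_k (r - 2) N
     \<and> (\<forall>i<r. poly_on r {xi i<..xi (Suc i)} N)
     \<and> (\<forall>x. x < xi 0 \<or> xi r < x \<longrightarrow> N x = 0)"

definition tpow :: "real \<Rightarrow> nat \<Rightarrow> real" where
  "tpow t j = (if 0 < t then t ^ j else 0)"

definition jump :: "(real \<Rightarrow> real) \<Rightarrow> real \<Rightarrow> real" where
  "jump g tau = Lim (at_right tau) g - Lim (at_left tau) g"

text \<open>Knot sequence Xi_k (indices 0..m+mt), with t^0_i = T1 (2 i).\<close>
definition Xi :: "nat \<Rightarrow> nat \<Rightarrow> (int \<Rightarrow> real) \<Rightarrow> int \<Rightarrow> nat \<Rightarrow> real" where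
  "Xi m mt T1 k j = (let l1 = int ((m + mt) div 2) in
      if int j < l1 then T1 (2 * (k + 1 - l1 + int j))
      else if int j = l1 then T1 (2 * k + 1)
      else T1 (2 * (k + int j - l1)))"

definition jump_coeff :: "nat \<Rightarrow> (real \<Rightarrow> real) \<Rightarrow> real \<Rightarrow> real" where
  "jump_coeff m f tau = jump ((deriv ^^ (m - 1)) f) tau / fact (m - 1)"

end

theory Submission
  imports Defs
begin

lemma tpow_pos: "0 < s \<Longrightarrow> tpow s p = s ^ p" by (simp add: tpow_def)
lemma tpow_nonpos: "s \<le> 0 \<Longrightarrow> tpow s p = 0" by (simp add: tpow_def)

lemma tpow_max: "p \<ge> 1 \<Longrightarrow> tpow s p = (max s 0) ^ p"
  by (simp add: tpow_def max_def)

lemma tpow_cont: "p \<ge> 1 \<Longrightarrow> continuous_on UNIV (\<lambda>t. tpow (t - a) p)"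
proof -
  assume p: "p \<ge> 1"
  have "continuous_on UNIV (\<lambda>t. (max (t - a) 0) ^ p)"
    by (intro continuous_on_power continuous_on_max continuous_on_diff continuous_on_id continuous_on_const)
  then show ?thesis using tpow_max[OF p] by simp
qed

lemma tpow_deriv:
  assumes "p \<ge> 2"
  shows "((\<lambda>t. tpow (t - a) p) has_real_derivative (of_nat p * tpow (t - a) (p - 1))) (at t)"
proof (cases "t > a")
  case True
  have "((\<lambda>t. (t - a) ^ p) has_real_derivative (of_nat p * (t - a) ^ (p - 1))) (at t)"
    by (auto intro!: derivative_eq_intros)
  then have "((\<lambda>t. tpow (t - a) p) has_real_derivative (of_nat p * (t - a) ^ (p - 1))) (at t)"
    apply (rule has_field_derivative_transform_within_open[where S="{a<..}"])
    using True by (auto simp: tpow_def)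
  then show ?thesis using True by (simp add: tpow_def)
next
  case False
  show ?thesis
  proof (cases "t < a")
    case True
    have "((\<lambda>t. 0) has_real_derivative 0) (at t)" by simp
    then have "((\<lambda>t. tpow (t - a) p) has_real_derivative 0) (at t)"
      apply (rule has_field_derivative_transform_within_open[where S="{..<a}"])
      using True by (auto simp: tpow_def)
    then show ?thesis using True by (simp add: tpow_def)
  next
    case False
    with \<open>\<not> t > a\<close> have ta: "t = a" by simp
    have "((\<lambda>y. (tpow (y - a) p - tpow (t - a) p) / (y - t)) \<longlongrightarrow> 0) (at t)"
    proof (rule Lim_null_comparison)
      show "\<forall>\<^sub>F y in at t. norm ((tpow (y - a) p - tpow (t - a) p) / (y - t)) \<le> \<bar>y - t\<bar> ^ (p - 1)"
      proof (rule always_eventually, rule allI)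
        fix y
        show "norm ((tpow (y - a) p - tpow (t - a) p) / (y - t)) \<le> \<bar>y - t\<bar> ^ (p - 1)"
        proof (cases "y > t")
          case True
          then have "norm ((tpow (y - a) p - tpow (t - a) p) / (y - t)) = (y - t) ^ p / (y - t)"
            using ta by (simp add: tpow_def)
          also have "\<dots> = (y - t) ^ (p - 1)"
          proof -
            obtain q where q: "p = Suc q" using assms by (cases p) auto
            show ?thesis using True by (simp add: q)
          qed
          finally show ?thesis using True by simp
        next
          case False
          then show ?thesis using ta by (simp add: tpow_def)
        qed
      qed
      show "((\<lambda>y. \<bar>y - t\<bar> ^ (p - 1)) \<longlongrightarrow> 0) (at t)"
        using assms by (auto intro!: tendsto_eq_intros simp: power_0_left)
    qed
    then show ?thesis using ta
      by (simp add: has_field_derivative_iff tpow_def)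
  qed
qed

definition TS :: "'i set \<Rightarrow> ('i \<Rightarrow> real) \<Rightarrow> ('i \<Rightarrow> real) \<Rightarrow> nat \<Rightarrow> real \<Rightarrow> real" where
  "TS S c xi p = (\<lambda>t. \<Sum>i\<in>S. c i * tpow (t - xi i) p)"

lemma TS_deriv:
  assumes "p \<ge> 2"
  shows "(TS S c xi p has_real_derivative TS S (\<lambda>i. c i * of_nat p) xi (p - 1) t) (at t)"
proof -
  have "((\<lambda>t. \<Sum>i\<in>S. c i * tpow (t - xi i) p) has_real_derivative
      (\<Sum>i\<in>S. c i * (of_nat p * tpow (t - xi i) (p-1)))) (at t)"
    by (intro DERIV_sum DERIV_cmult tpow_deriv assms)
  then show ?thesis by (simp add: TS_def mult_ac)
qed

lemma TS_deriv_eq: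
  assumes "p \<ge> 2"
  shows "deriv (TS S c xi p) = TS S (\<lambda>i. c i * of_nat p) xi (p - 1)"
  using TS_deriv[OF assms] DERIV_imp_deriv by blast

lemma TS_derivs:
  assumes "j < p"
  shows "(deriv ^^ j) (TS S c xi p) = TS S (\<lambda>i. c i * (fact p / fact (p - j))) xi (p - j)"
  using assms
proof (induction j)
  case 0
  then show ?case by (simp add: TS_def)
next
  case (Suc j)
  have "(deriv ^^ Suc j) (TS S c xi p) = deriv (TS S (\<lambda>i. c i * (fact p / fact (p - j))) xi (p - j))"
    using Suc by simp
  also have "\<dots> = TS S (\<lambda>i. c i * (fact p / fact (p - j)) * of_nat (p - j)) xi (p - j - 1)"
    using Suc by (intro TS_deriv_eq) auto
  also have "(\<lambda>i. c i * (fact p / fact (p - j)) * of_nat (p - j)) = (\<lambda>i. c i * (fact p / fact (p - Suc j)))"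
  proof
    fix i
    have e: "p - j = Suc (p - Suc j)" using Suc by auto
    show "c i * (fact p / fact (p - j)) * of_nat (p - j) = c i * (fact p / fact (p - Suc j))"
    proof -
      have "fact (Suc (p - Suc j)) = (of_nat (Suc (p - Suc j)) :: real) * fact (p - Suc j)"
        by (rule fact_Suc)
      moreover have "(fact (p - Suc j)::real) > 0" by simp
      ultimately show ?thesis unfolding e by (simp del: of_nat_Suc fact_Suc)
    qed
  qed
  finally show ?case by (metis diff_Suc_eq_diff_pred diff_commute)
qed

lemma TS_cont: "p \<ge> 1 \<Longrightarrow> continuous_on UNIV (TS S c xi p)"
  unfolding TS_def by (intro continuous_on_sum continuous_on_mult continuous_on_const tpow_cont)

lemma TS_Ck:
  assumes "p \<ge> 1"
  shows "C_k (p - 1) (TS S c xi p)"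
  unfolding C_k_def
proof safe
  fix j x assume j: "j < p - 1"
  show "(deriv ^^ j) (TS S c xi p) differentiable at x"
  proof -
    have "(deriv ^^ j) (TS S c xi p) = TS S (\<lambda>i. c i * (fact p / fact (p - j))) xi (p - j)"
      using j by (intro TS_derivs) auto
    moreover have "p - j \<ge> 2" using j by auto
    ultimately show ?thesis
      using TS_deriv[of "p - j"] real_differentiable_def by metis
  qed
next
  show "continuous_on UNIV ((deriv ^^ (p - 1)) (TS S c xi p))"
    using assms by (subst TS_derivs) (auto intro!: TS_cont)
qed


lemma pderivs_add: "(pderiv ^^ j) (p + q) = (pderiv ^^ j) p + (pderiv ^^ j) (q :: real poly)"
  by (induction j) (auto simp: pderiv_add)

lemma pderivs_diff: "(pderiv ^^ j) (p - q) = (pderiv ^^ j) p - (pderiv ^^ j) (q :: real poly)"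
  by (induction j) (auto simp: pderiv_diff)

lemma pderivs_smult: "(pderiv ^^ j) (smult c p) = smult c ((pderiv ^^ j) (p :: real poly))"
  by (induction j) (auto simp: pderiv_smult)

lemma pderivs_sum: "finite S \<Longrightarrow> (pderiv ^^ j) (\<Sum>i\<in>S. f i) = (\<Sum>i\<in>S. (pderiv ^^ j) (f i :: real poly))"
  by (induction S rule: finite_induct) (auto simp: pderivs_add)

lemma pderiv_lin: "pderiv [:-x, 1:] = (1 :: real poly)"
  by (simp add: pderiv_pCons)

lemma pderivs_lin_power:
  "(pderiv ^^ j) ([:-x, 1:] ^ (j + q)) = smult (fact (j + q) / fact q) ([:-x, 1:] ^ q :: real poly)"
proof (induction j)
  case 0
  then show ?case by simp
next
  case (Suc j)
  have "(pderiv ^^ Suc j) ([:-x, 1:] ^ (Suc j + q)) = (pderiv ^^ j) (pderiv ([:-x, 1:] ^ Suc (j + q)))"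
    by (simp add: funpow_Suc_right del: funpow.simps)
  also have "pderiv ([:-x, 1:] ^ Suc (j + q)) = smult (of_nat (Suc (j + q))) ([:-x, 1:] ^ (j + q))"
    by (simp add: pderiv_power_Suc pderiv_lin del: power_Suc)
  also have "(pderiv ^^ j) \<dots> = smult (of_nat (Suc (j + q)) * (fact (j + q) / fact q)) ([:-x, 1:] ^ q)"
    by (simp add: pderivs_smult Suc)
  also have "of_nat (Suc (j + q)) * (fact (j + q) / fact q) = (fact (Suc j + q) / fact q :: real)"
    by (simp add: field_simps del: of_nat_Suc)
  finally show ?case .
qed

lemma deriv_local_poly:
  fixes f :: "real \<Rightarrow> real" and P :: "real poly"
  assumes "open U" "\<forall>t\<in>U. f t = poly P t"
  shows "\<forall>t\<in>U. (deriv ^^ j) f t = poly ((pderiv ^^ j) P) t"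
proof (induction j)
  case 0
  then show ?case using assms by simp
next
  case (Suc j)
  show ?case
  proof
    fix t assume t: "t \<in> U"
    have "(poly ((pderiv ^^ j) P) has_real_derivative poly (pderiv ((pderiv ^^ j) P)) t) (at t)"
      by (rule poly_DERIV)
    then have "((deriv ^^ j) f has_real_derivative poly (pderiv ((pderiv ^^ j) P)) t) (at t)"
      by (rule has_field_derivative_transform_within_open[OF _ assms(1) t]) (use Suc in auto)
    then show "(deriv ^^ Suc j) f t = poly ((pderiv ^^ Suc j) P) t"
      by (simp add: DERIV_imp_deriv)
  qed
qed

lemma oneside_right:
  fixes g :: "real \<Rightarrow> real"
  assumes "isCont g x" "x < b" "\<forall>t\<in>{x<..<b}. g t = h t" "isCont h x"
  shows "g x = h x"
proof -
  have "(g \<longlongrightarrow> g x) (at_right x)" using assms(1) by (simp add: isCont_def filterlim_at_split)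
  moreover have "(g \<longlongrightarrow> h x) (at_right x)"
  proof -
    have "(h \<longlongrightarrow> h x) (at_right x)" using assms(4) by (simp add: isCont_def filterlim_at_split)
    moreover have "eventually (\<lambda>t. h t = g t) (at_right x)"
      using assms(2,3) unfolding eventually_at_right[OF assms(2)] by auto
    ultimately show ?thesis by (rule Lim_transform_eventually)
  qed
  ultimately show ?thesis using tendsto_unique trivial_limit_at_right_real by blast
qed

lemma oneside_left:
  fixes g :: "real \<Rightarrow> real"
  assumes "isCont g x" "a < x" "\<forall>t\<in>{a<..<x}. g t = h t" "isCont h x"
  shows "g x = h x"
proof -
  have "(g \<longlongrightarrow> g x) (at_left x)" using assms(1) by (simp add: isCont_def filterlim_at_split)
  moreover have "(g \<longlongrightarrow> h x) (at_left x)"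
  proof -
    have "(h \<longlongrightarrow> h x) (at_left x)" using assms(4) by (simp add: isCont_def filterlim_at_split)
    moreover have "eventually (\<lambda>t. h t = g t) (at_left x)"
      using assms(2,3) unfolding eventually_at_left[OF assms(2)] by auto
    ultimately show ?thesis by (rule Lim_transform_eventually)
  qed
  ultimately show ?thesis using tendsto_unique trivial_limit_at_left_real by blast
qed

lemma coeff_pderivs:
  "coeff ((pderiv ^^ j) p) k = (fact (k + j) / fact k) * coeff (p :: real poly) (k + j)"
proof (induction j arbitrary: k)
  case 0
  then show ?case by simp
next
  case (Suc j)
  have "coeff ((pderiv ^^ Suc j) p) k = of_nat (Suc k) * coeff ((pderiv ^^ j) p) (Suc k)"
    by (simp add: coeff_pderiv)
  also have "\<dots> = of_nat (Suc k) * ((fact (Suc k + j) / fact (Suc k)) * coeff p (Suc k + j))"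
    by (simp add: Suc)
  also have "\<dots> = (fact (k + Suc j) / fact k) * coeff p (k + Suc j)"
    by (simp add: field_simps del: of_nat_Suc)
  finally show ?case .
qed

lemma pderivs_pcompose_lin:
  fixes a :: real
  shows "(pderiv ^^ j) (pcompose D [:a, 1:]) = pcompose ((pderiv ^^ j) D) [:a, 1:]"
  by (induction j) (auto simp: pderiv_pcompose pderiv_pCons)

lemma taylor_vanish:
  fixes D :: "real poly"
  assumes "degree D \<le> n" "\<forall>j<n. poly ((pderiv ^^ j) D) a = 0"
  shows "D = smult (coeff (pcompose D [:a, 1:]) n) ([:-a, 1:] ^ n)"
proof -
  define E where "E = pcompose D [:a, 1:]"
  have cE: "coeff E j = 0" if "j < n" for j
  proof -
    have "poly ((pderiv ^^ j) E) 0 = 0"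
      using assms(2) that by (simp add: E_def pderivs_pcompose_lin poly_pcompose)
    then show ?thesis by (simp add: poly_0_coeff_0 coeff_pderivs)
  qed
  have dE: "degree E \<le> n" using assms(1) by (simp add: E_def degree_pcompose)
  have Em: "E = monom (coeff E n) n"
  proof (rule poly_eqI)
    fix j show "coeff E j = coeff (monom (coeff E n) n) j"
      using cE dE coeff_eq_0[of E j] by (cases "j < n"; cases "j = n") (auto simp: coeff_monom)
  qed
  have "poly D t = poly (smult (coeff E n) ([:-a, 1:] ^ n)) t" for t
  proof -
    have "poly D t = poly E (t - a)" by (simp add: E_def poly_pcompose)
    also have "\<dots> = coeff E n * (t - a) ^ n"
      by (subst Em) (simp add: poly_monom)
    finally show ?thesis by simp
  qed
  then show ?thesis unfolding E_def[symmetric]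
    using poly_eq_poly_eq_iff by blast
qed


lemma pderiv_lin': "pderiv [:-x, 1:] = (1 :: real poly)"
  by (simp add: pderiv_pCons)

lemma op_power:
  fixes a b :: real
  shows "[:-a, 1:] * pderiv ([:-b, 1:] ^ Suc p) - smult (of_nat (Suc p)) ([:-b, 1:] ^ Suc p)
     = smult (of_nat (Suc p) * (b - a)) ([:-b, 1:] ^ p)"
proof -
  have e: "[:-a, 1:] - [:-b, 1:] = [:b - a:]" by simp
  have d: "pderiv ([:-b, 1:] ^ Suc p) = smult (of_nat (Suc p)) ([:-b, 1:] ^ p)"
    by (simp add: pderiv_power_Suc pderiv_lin' del: power_Suc)
  have ar: "(t - a) * (q * z) - q * ((t - b) * z) = q * (b - a) * z" for t q z :: real
    by (simp add: algebra_simps)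
  have "poly ([:-a, 1:] * pderiv ([:-b, 1:] ^ Suc p) - smult (of_nat (Suc p)) ([:-b, 1:] ^ Suc p))
     = poly (smult (of_nat (Suc p) * (b - a)) ([:-b, 1:] ^ p))"
  proof
    fix t
    show "poly ([:-a, 1:] * pderiv ([:-b, 1:] ^ Suc p) - smult (of_nat (Suc p)) ([:-b, 1:] ^ Suc p)) t
     = poly (smult (of_nat (Suc p) * (b - a)) ([:-b, 1:] ^ p)) t"
      unfolding d by (simp del: of_nat_Suc add: algebra_simps)
  qed
  then show ?thesis using poly_eq_poly_eq_iff by blast
qed

definition OpL :: "real \<Rightarrow> nat \<Rightarrow> real poly \<Rightarrow> real poly" where
  "OpL a p Q = [:-a, 1:] * pderiv Q - smult (of_nat (Suc p)) Q"

lemma OpL_add: "OpL a p (Q + R) = OpL a p Q + OpL a p R"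
  unfolding OpL_def by (simp add: pderiv_add distrib_left smult_add_right)

lemma OpL_smult: "OpL a p (smult c Q) = smult c (OpL a p Q)"
  unfolding OpL_def by (simp add: pderiv_smult smult_diff_right mult_smult_right smult_smult mult.commute)

lemma OpL_sum: "finite A \<Longrightarrow> OpL a p (\<Sum>i\<in>A. f i) = (\<Sum>i\<in>A. OpL a p (f i))"
proof (induction A rule: finite_induct)
  case empty
  then show ?case by (simp add: OpL_def)
next
  case (insert x F)
  then show ?case by (simp add: OpL_add)
qed

lemma OpL_term: "OpL a p (smult c ([:-b, 1:] ^ Suc p)) = smult (c * (of_nat (Suc p) * (b - a))) ([:-b, 1:] ^ p)"
  unfolding OpL_smult using op_power[of a b p] by (simp add: OpL_def del: power_Suc)

lemma lin_indep_powers: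
  fixes xi :: "'i \<Rightarrow> real"
  assumes "finite S" "card S \<le> Suc p" "inj_on xi S"
    "(\<Sum>i\<in>S. smult (c i) ([:-xi i, 1:] ^ p)) = 0"
  shows "\<forall>i\<in>S. c i = 0"
  using assms
proof (induction p arbitrary: S c)
  case 0
  show ?case
  proof
    fix i assume i: "i \<in> S"
    have "\<forall>a1\<in>S. \<forall>a2\<in>S. a1 = a2" using 0(1,2) card_le_Suc0_iff_eq by blast
    then have "S = {i}" using i by blast
    then show "c i = 0" using 0(4) by simp
  qed
next
  case (Suc p)
  show ?case
  proof (cases "S = {}")
    case True then show ?thesis by simp
  next
    case False
    then obtain s where s: "s \<in> S" by blast
    have "OpL (xi s) p (\<Sum>i\<in>S. smult (c i) ([:-xi i, 1:] ^ Suc p)) = 0"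
      using Suc.prems(4) by (simp add: OpL_def)
    then have "(\<Sum>i\<in>S. smult (c i * (of_nat (Suc p) * (xi i - xi s))) ([:-xi i, 1:] ^ p)) = 0"
      using Suc.prems(1) by (simp only: OpL_sum OpL_term)
    then have "(\<Sum>i\<in>S - {s}. smult (c i * (of_nat (Suc p) * (xi i - xi s))) ([:-xi i, 1:] ^ p)) = 0"
      using Suc.prems(1) s by (simp add: sum.remove)
    then have z: "\<forall>i\<in>S - {s}. c i * (of_nat (Suc p) * (xi i - xi s)) = 0"
      using Suc.prems(1,2,3) s
      by (intro Suc.IH) (auto simp: card_Diff_singleton inj_on_diff)
    have zi: "\<forall>i\<in>S - {s}. c i = 0"
    proof
      fix i assume i: "i \<in> S - {s}"
      then have "xi i \<noteq> xi s" using Suc.prems(3) s by (auto dest: inj_onD)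
      then show "c i = 0" using z i by auto
    qed
    then have "(\<Sum>i\<in>S. smult (c i) ([:-xi i, 1:] ^ Suc p)) = smult (c s) ([:-xi s, 1:] ^ Suc p)"
      using Suc.prems(1) s by (simp add: sum.remove)
    then have "smult (c s) ([:-xi s, 1:] ^ Suc p) = 0" using Suc.prems(4) by simp
    then have "c s = 0" by (simp del: power_Suc)
    with zi show ?thesis by blast
  qed
qed


definition Lp :: "(nat \<Rightarrow> real) \<Rightarrow> nat \<Rightarrow> nat \<Rightarrow> real poly" where
  "Lp pts m s = smult (1 / (\<Prod>s'\<in>{..<m}-{s}. (pts s - pts s'))) (\<Prod>s'\<in>{..<m}-{s}. [:-pts s', 1:])"

lemma Lp_eval:
  assumes "inj_on pts {..<m}" "s < m" "s2 < m"
  shows "poly (Lp pts m s) (pts s2) = (if s2 = s then 1 else 0)"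
proof (cases "s2 = s")
  case True
  have "(\<Prod>s'\<in>{..<m}-{s}. (pts s - pts s')) \<noteq> 0"
    using assms by (auto dest: inj_onD)
  then show ?thesis using True by (simp add: Lp_def poly_prod)
next
  case False
  then have "s2 \<in> {..<m}-{s}" using assms by auto
  then have "(\<Prod>s'\<in>{..<m}-{s}. poly [:-pts s', 1:] (pts s2)) = 0"
    by (intro prod_zero) auto
  then show ?thesis using False by (simp add: Lp_def poly_prod)
qed

lemma Lp_degree: "s < m \<Longrightarrow> degree (Lp pts m s) \<le> m - 1"
proof -
  assume s: "s < m"
  have "degree (\<Prod>s'\<in>{..<m}-{s}. [:-pts s', 1:]) \<le> (\<Sum>s'\<in>{..<m}-{s}. degree [:-pts s', 1:])"
    using degree_prod_sum_le[of "{..<m}-{s}" "\<lambda>s'. [:-pts s', 1:]"] by (simp add: o_def)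
  also have "\<dots> = m - 1" using s by simp
  finally show ?thesis unfolding Lp_def using degree_smult_le order_trans by blast
qed

lemma lagrange:
  fixes P :: "real poly"
  assumes "inj_on pts {..<m}" "degree P < m"
  shows "poly P t = (\<Sum>s<m. poly P (pts s) * poly (Lp pts m s) t)"
proof -
  define Q where "Q = P - (\<Sum>s<m. smult (poly P (pts s)) (Lp pts m s))"
  have roots: "poly Q (pts s2) = 0" if "s2 < m" for s2
  proof -
    have "(\<Sum>s<m. poly P (pts s) * poly (Lp pts m s) (pts s2)) = poly P (pts s2)"
      using that assms(1) by (simp add: Lp_eval if_distrib sum.delta cong: if_cong)
    then show ?thesis by (simp add: Q_def poly_sum)
  qed
  have "Q = 0"
  proof (rule ccontr)
    assume Q: "Q \<noteq> 0"
    have dQ: "degree Q \<le> m - 1"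
      unfolding Q_def using assms(2) Lp_degree
      by (intro degree_diff_le degree_sum_le) (auto intro: order_trans[OF degree_smult_le])
    have "pts ` {..<m} \<subseteq> {x. poly Q x = 0}" using roots by auto
    then have "card (pts ` {..<m}) \<le> card {x. poly Q x = 0}"
      using poly_roots_finite[OF Q] by (intro card_mono) auto
    also have "\<dots> \<le> degree Q" using card_poly_roots_bound[OF Q] .
    finally have "m \<le> degree Q" using card_image[OF assms(1)] by simp
    with dQ assms(2) show False by linarith
  qed
  then have eq: "P = (\<Sum>s<m. smult (poly P (pts s)) (Lp pts m s))" by (simp add: Q_def)
  have "poly P t = poly (\<Sum>s<m. smult (poly P (pts s)) (Lp pts m s)) t"
    by (rule arg_cong[OF eq])
  also have "\<dots> = (\<Sum>s<m. poly P (pts s) * poly (Lp pts m s) t)" by (simp add: poly_sum)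
  finally show ?thesis .
qed


lemma TS_local_poly:
  fixes xi :: "'i \<Rightarrow> real"
  assumes "finite S" "\<forall>i\<in>S. xi i \<le> u \<or> v \<le> xi i"
  shows "\<exists>P. degree P \<le> p \<and> (\<forall>t\<in>{u<..v}. TS S c xi p t = poly P t)"
proof -
  define P where "P = (\<Sum>i\<in>S. smult (c i) (if xi i \<le> u then [:-xi i, 1:] ^ p else 0))"
  have "degree P \<le> p" unfolding P_def using assms(1)
    by (intro degree_sum_le) (auto intro: order_trans[OF degree_smult_le] simp: degree_linear_power)
  moreover have "TS S c xi p t = poly P t" if t: "t \<in> {u<..v}" for t
    unfolding TS_def P_def poly_sum
  proof (rule sum.cong[OF refl])
    fix i assume i: "i \<in> S"
    show "c i * tpow (t - xi i) p = poly (smult (c i) (if xi i \<le> u then [:-xi i, 1:] ^ p else 0)) t"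
      using assms(2) i t by (auto simp: tpow_def)
  qed
  ultimately show ?thesis by blast
qed

lemma jump_local:
  fixes f :: "real \<Rightarrow> real" and P :: "real poly"
  assumes "u < x" "x < v" "\<forall>t\<in>{u<..<v}. f t = poly P t + c * tpow (t - x) n"
  shows "jump ((deriv ^^ n) f) x = c * fact n"
proof -
  define h where "h = poly ((pderiv ^^ n) P)"
  have R: "\<forall>t\<in>{x<..<v}. f t = poly (P + smult c ([:-x, 1:] ^ n)) t"
    using assms(1,3) by (auto simp: tpow_def)
  have "\<forall>t\<in>{x<..<v}. (deriv ^^ n) f t = poly ((pderiv ^^ n) (P + smult c ([:-x, 1:] ^ n))) t"
    by (rule deriv_local_poly[OF _ R]) simp
  moreover have "(pderiv ^^ n) ([:-x, 1:] ^ n) = [:fact n:]"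
    using pderivs_lin_power[of n x 0] by simp
  ultimately have R': "\<forall>t\<in>{x<..<v}. (deriv ^^ n) f t = h t + c * fact n"
    by (simp add: h_def pderivs_add pderivs_smult)
  have L: "\<forall>t\<in>{u<..<x}. f t = poly P t"
    using assms(2,3) by (auto simp: tpow_def)
  have L': "\<forall>t\<in>{u<..<x}. (deriv ^^ n) f t = h t"
    unfolding h_def by (rule deriv_local_poly[OF _ L]) simp
  have "((\<lambda>t. h t + c * fact n) \<longlongrightarrow> h x + c * fact n) (at_right x)"
    unfolding h_def by (intro tendsto_intros)
  moreover have "eventually (\<lambda>t. h t + c * fact n = (deriv ^^ n) f t) (at_right x)"
    using R' assms(2) unfolding eventually_at_right[OF assms(2)] by auto
  ultimately have "((deriv ^^ n) f \<longlongrightarrow> h x + c * fact n) (at_right x)"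
    by (rule Lim_transform_eventually)
  then have r: "Lim (at_right x) ((deriv ^^ n) f) = h x + c * fact n"
    by (intro tendsto_Lim) (simp add: trivial_limit_at_right_real)
  have "(h \<longlongrightarrow> h x) (at_left x)"
    unfolding h_def by (intro tendsto_intros)
  moreover have "eventually (\<lambda>t. h t = (deriv ^^ n) f t) (at_left x)"
    using L' assms(1) unfolding eventually_at_left[OF assms(1)] by auto
  ultimately have "((deriv ^^ n) f \<longlongrightarrow> h x) (at_left x)"
    by (rule Lim_transform_eventually)
  then have l: "Lim (at_left x) ((deriv ^^ n) f) = h x"
    by (intro tendsto_Lim) (simp add: trivial_limit_at_left_real)
  show ?thesis unfolding jump_def r l by simp
qed


lemma find_interval:
  fixes xi :: "nat \<Rightarrow> real"
  assumes "strict_mono xi" "xi 0 < t" "t \<le> xi r"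
  shows "\<exists>i<r. xi i < t \<and> t \<le> xi (Suc i)"
  using assms(2,3)
proof (induction r)
  case 0
  then show ?case by simp
next
  case (Suc r)
  show ?case
  proof (cases "t \<le> xi r")
    case True
    then show ?thesis using Suc by (metis less_Suc_eq)
  next
    case False
    then show ?thesis using Suc.prems by auto
  qed
qed

lemma Ck_isCont:
  assumes "C_k n f" "j \<le> n"
  shows "isCont ((deriv ^^ j) f) x"
proof (cases "j < n")
  case True
  then have "(deriv ^^ j) f differentiable (at x)" using assms(1) by (simp add: C_k_def)
  then show ?thesis by (rule differentiable_imp_continuous_within)
next
  case False
  then have "j = n" using assms(2) by simp
  then show ?thesis using assms(1) by (simp add: C_k_def continuous_on_eq_continuous_at)
qed

lemma bspline_rep:
  fixes xi :: "nat \<Rightarrow> real" and N :: "real \<Rightarrow> real"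
  assumes r3: "r \<ge> 3" and sm: "strict_mono xi" and bs: "is_bspline r xi N"
  shows "\<exists>c. (\<forall>t. N t = TS {..r} c xi (r - 1) t)
             \<and> (\<Sum>i\<in>{..r}. smult (c i) ([:-xi i, 1:] ^ (r - 1))) = 0"
proof -
  have Ck: "C_k (r - 2) N" and zero: "\<forall>x. x < xi 0 \<or> xi r < x \<longrightarrow> N x = 0"
    and pieces: "\<forall>i<r. poly_on r {xi i<..xi (Suc i)} N"
    using bs by (auto simp: is_bspline_def)
  have "\<forall>i. \<exists>p. i < r \<longrightarrow> degree p < r \<and> (\<forall>x\<in>{xi i<..xi (Suc i)}. N x = poly p x)"
    using pieces by (auto simp: poly_on_def)
  then obtain P where P: "\<And>i. i < r \<Longrightarrow> degree (P i) < r \<and> (\<forall>x\<in>{xi i<..xi (Suc i)}. N x = poly (P i) x)"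
    by metis
  define Q where "Q i = (if i = 0 then 0 else if i \<le> r then P (i - 1) else 0)" for i
  have mono: "i \<le> j \<Longrightarrow> xi i \<le> xi j" for i j using sm by (simp add: strict_mono_less_eq)
  have smono: "i < j \<Longrightarrow> xi i < xi j" for i j using sm by (simp add: strict_mono_less)
  have degQ: "degree (Q i) \<le> r - 1" for i
  proof (cases "0 < i \<and> i \<le> r")
    case True
    then have "degree (P (i - 1)) < r" using P[of "i - 1"] by auto
    then show ?thesis using True by (simp add: Q_def)
  next
    case False
    then show ?thesis by (auto simp: Q_def)
  qed
  define lb where "lb i = (if i = 0 then xi 0 - 1 else xi (i - 1))" for i
  define rb where "rb i = (if i \<ge> r then xi r + 1 else xi (Suc i))" for i
  have lb: "lb i < xi i" for i using smono[of "i - 1" i] by (auto simp: lb_def)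
  have rb: "i \<le> r \<Longrightarrow> xi i < rb i" for i using smono[of i "Suc i"] by (auto simp: rb_def)
  have left: "\<forall>t\<in>{lb i<..<xi i}. N t = poly (Q i) t" if "i \<le> r" for i
  proof
    fix t assume t: "t \<in> {lb i<..<xi i}"
    show "N t = poly (Q i) t"
    proof (cases "i = 0")
      case True then show ?thesis using t zero by (simp add: Q_def)
    next
      case False
      then show ?thesis using t P[of "i - 1"] that by (auto simp: Q_def lb_def)
    qed
  qed
  have right: "\<forall>t\<in>{xi i<..<rb i}. N t = poly (Q (Suc i)) t" if "i \<le> r" for i
  proof
    fix t assume t: "t \<in> {xi i<..<rb i}"
    show "N t = poly (Q (Suc i)) t"
    proof (cases "i = r")
      case True then show ?thesis using t zero by (simp add: Q_def rb_def)
    next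
      case False
      then show ?thesis using t P[of i] that by (auto simp: Q_def rb_def)
    qed
  qed
  have vanish: "\<forall>j<r - 1. poly ((pderiv ^^ j) (Q (Suc i) - Q i)) (xi i) = 0" if i: "i \<le> r" for i
  proof safe
    fix j assume j: "j < r - 1"
    have cj: "isCont ((deriv ^^ j) N) x" for x using Ck j by (intro Ck_isCont) auto
    have "\<forall>t\<in>{xi i<..<rb i}. (deriv ^^ j) N t = poly ((pderiv ^^ j) (Q (Suc i))) t"
      by (rule deriv_local_poly[OF _ right[OF i]]) simp
    then have e1: "(deriv ^^ j) N (xi i) = poly ((pderiv ^^ j) (Q (Suc i))) (xi i)"
      by (intro oneside_right[OF cj rb[OF i]]) auto
    have "\<forall>t\<in>{lb i<..<xi i}. (deriv ^^ j) N t = poly ((pderiv ^^ j) (Q i)) t"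
      by (rule deriv_local_poly[OF _ left[OF i]]) simp
    then have e2: "(deriv ^^ j) N (xi i) = poly ((pderiv ^^ j) (Q i)) (xi i)"
      by (intro oneside_left[OF cj lb]) auto
    show "poly ((pderiv ^^ j) (Q (Suc i) - Q i)) (xi i) = 0"
      using e1 e2 by (simp add: pderivs_diff)
  qed
  define c where "c i = coeff (pcompose (Q (Suc i) - Q i) [:xi i, 1:]) (r - 1)" for i
  have jumpQ: "Q (Suc i) - Q i = smult (c i) ([:-xi i, 1:] ^ (r - 1))" if i: "i \<le> r" for i
    unfolding c_def
  proof (rule taylor_vanish)
    show "degree (Q (Suc i) - Q i) \<le> r - 1"
      using degQ by (meson degree_diff_le)
    show "\<forall>j<r - 1. poly ((pderiv ^^ j) (Q (Suc i) - Q i)) (xi i) = 0"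
      by (rule vanish[OF i])
  qed
  have tele: "Q i = (\<Sum>j<i. smult (c j) ([:-xi j, 1:] ^ (r - 1)))" if "i \<le> Suc r" for i
    using that
  proof (induction i)
    case 0 then show ?case by (simp add: Q_def)
  next
    case (Suc i)
    then have "Q (Suc i) = Q i + smult (c i) ([:-xi i, 1:] ^ (r - 1))"
      using jumpQ[of i] by (simp add: algebra_simps)
    then show ?case using Suc by simp
  qed
  have sum0: "(\<Sum>i\<in>{..r}. smult (c i) ([:-xi i, 1:] ^ (r - 1))) = 0"
    using tele[of "Suc r"] by (simp add: Q_def lessThan_Suc_atMost)
  have inner: "TS {..r} c xi (r - 1) t = poly (Q (Suc i)) t"
    if i: "i \<le> r" and t1: "xi i < t" and t2: "i < r \<Longrightarrow> t \<le> xi (Suc i)" for i t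
  proof -
    have "TS {..r} c xi (r - 1) t = (\<Sum>j\<in>{..<Suc i}. c j * tpow (t - xi j) (r - 1))"
      unfolding TS_def
    proof (rule sum.mono_neutral_right)
      show "finite {..r}" by simp
      show "{..<Suc i} \<subseteq> {..r}" using i by auto
      show "\<forall>j\<in>{..r} - {..<Suc i}. c j * tpow (t - xi j) (r - 1) = 0"
      proof
        fix j assume j: "j \<in> {..r} - {..<Suc i}"
        then have "i < r" "Suc i \<le> j" using i by auto
        then have "t \<le> xi j" using t2 mono[of "Suc i" j] by auto
        then show "c j * tpow (t - xi j) (r - 1) = 0" by (simp add: tpow_def)
      qed
    qed
    also have "\<dots> = (\<Sum>j<Suc i. c j * (t - xi j) ^ (r - 1))"
    proof (rule sum.cong[OF refl])
      fix j assume "j \<in> {..<Suc i}"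
      then have "xi j < t" using mono[of j i] t1 by auto
      then show "c j * tpow (t - xi j) (r - 1) = c j * (t - xi j) ^ (r - 1)" by (simp add: tpow_def)
    qed
    also have "\<dots> = poly (Q (Suc i)) t"
      using tele[of "Suc i"] i by (simp add: poly_sum)
    finally show ?thesis .
  qed
  have "N t = TS {..r} c xi (r - 1) t" for t
  proof -
    consider "t < xi 0" | "t = xi 0" | "xi 0 < t \<and> t \<le> xi r" | "xi r < t" by linarith
    then show ?thesis
    proof cases
      case 1
      have "\<forall>j\<in>{..r}. tpow (t - xi j) (r - 1) = 0"
      proof
        fix j have "xi 0 \<le> xi j" by (rule mono) simp
        then show "tpow (t - xi j) (r - 1) = 0" using 1 by (simp add: tpow_def)
      qed
      then show ?thesis using 1 zero by (simp add: TS_def)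
    next
      case 2
      have "\<forall>j\<in>{..r}. tpow (t - xi j) (r - 1) = 0"
      proof
        fix j have "xi 0 \<le> xi j" by (rule mono) simp
        then show "tpow (t - xi j) (r - 1) = 0" using 2 by (simp add: tpow_def)
      qed
      moreover have "N (xi 0) = 0"
      proof -
        have "isCont N (xi 0)" using Ck_isCont[OF Ck, of 0] by simp
        moreover have "\<forall>t\<in>{xi 0 - 1<..<xi 0}. N t = (\<lambda>_. 0) t" using zero by auto
        ultimately show ?thesis by (intro oneside_left[where a="xi 0 - 1"]) auto
      qed
      ultimately show ?thesis using 2 by (simp add: TS_def)
    next
      case 3
      then obtain i where i: "i < r" "xi i < t" "t \<le> xi (Suc i)"
        using find_interval[OF sm] by blast
      then have "N t = poly (P i) t" using P[of i] by auto
      also have "\<dots> = poly (Q (Suc i)) t" using i by (simp add: Q_def)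
      also have "\<dots> = TS {..r} c xi (r - 1) t" using inner[of i t] i by simp
      finally show ?thesis .
    next
      case 4
      have "TS {..r} c xi (r - 1) t = poly (Q (Suc r)) t" using inner[of r t] 4 by simp
      also have "\<dots> = 0" by (simp add: Q_def)
      finally show ?thesis using 4 zero by simp
    qed
  qed
  then show ?thesis using sum0 by blast
qed


lemma hassum_local:
  fixes T :: "int \<Rightarrow> real" and a :: "int \<Rightarrow> real" and s :: "real \<Rightarrow> real"
  assumes sm: "strict_mono T" and m: "m \<ge> 1"
    and hs: "\<forall>t. ((\<lambda>i. a i * tpow (t - T i) (m - 1)) has_sum s t) UNIV"
  shows "\<exists>P. \<forall>t\<in>{T (K - 1)<..<T (K + 1)}. s t = poly P t + a K * tpow (t - T K) (m - 1)"
proof -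
  define u where "u = T (K - 1)"
  define v where "v = T (K + 1)"
  have uv: "u < v" using sm unfolding u_def v_def by (simp add: strict_mono_less)
  define I where "I = (UNIV :: int set) - {K}"
  define G where "G t = s t - a K * tpow (t - T K) (m - 1)" for t
  define B where "B i = (if i < K then [:-T i, 1:] ^ (m - 1) else 0)" for i
  have hsI: "((\<lambda>i. a i * tpow (t - T i) (m - 1)) has_sum G t) I" for t
  proof -
    have "((\<lambda>i. a i * tpow (t - T i) (m - 1)) has_sum (a K * tpow (t - T K) (m - 1))) {K}"
      using has_sum_finite[of "{K}" "\<lambda>i. a i * tpow (t - T i) (m - 1)"] by simp
    from has_sum_Diff[OF hs[rule_format, of t] this] show ?thesis
      by (simp add: G_def I_def)
  qed
  have hsB: "((\<lambda>i. a i * poly (B i) t) has_sum G t) I" if t: "t \<in> {u<..<v}" for t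
  proof -
    have "a i * tpow (t - T i) (m - 1) = a i * poly (B i) t" if i: "i \<in> I" for i
    proof (cases "i < K")
      case True
      then have "T i \<le> u" unfolding u_def using sm by (simp add: strict_mono_less_eq)
      then show ?thesis using True t by (simp add: B_def tpow_def)
    next
      case False
      then have "i \<ge> K + 1" using i by (auto simp: I_def)
      then have "v \<le> T i" unfolding v_def using sm by (simp add: strict_mono_less_eq)
      then show ?thesis using False t by (simp add: B_def tpow_def)
    qed
    then show ?thesis using hsI[of t] has_sum_cong by (metis (no_types, lifting))
  qed
  define pts where "pts s = u + (of_nat s + 1) * (v - u) / (of_nat m + 1)" for s :: nat
  have pts_in: "pts s \<in> {u<..<v}" if "s < m" for s
  proof -
    have "0 < (of_nat s + 1) * (v - u) / (of_nat m + 1)" using uv by simp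
    moreover have "(of_nat s + 1) * (v - u) / (of_nat m + 1) < v - u"
    proof -
      have h: "(v - u) * (real m - real s) > 0" using uv that by (intro mult_pos_pos) auto
      have "(of_nat s + 1) * (v - u) < (v - u) * (of_nat m + 1)"
        using h by (simp add: algebra_simps)
      then show ?thesis by (simp add: pos_divide_less_eq add_pos_nonneg)
    qed
    ultimately show ?thesis by (simp add: pts_def)
  qed
  have inj: "inj_on pts {..<m}"
  proof (rule inj_onI)
    fix x y assume eq: "pts x = pts y"
    then have "(real x + 1) * (v - u) / (real m + 1) = (real y + 1) * (v - u) / (real m + 1)"
      by (simp add: pts_def)
    then have "(real x + 1) * (v - u) = (real y + 1) * (v - u)"
      by (simp add: divide_cancel_right add_pos_nonneg)
    then have "real x + 1 = real y + 1" using uv by simp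
    then show "x = y" by simp
  qed
  have degB: "degree (\<Sum>i\<in>F. smult (a i) (B i)) < m" for F
  proof -
    have "degree (\<Sum>i\<in>F. smult (a i) (B i)) \<le> m - 1"
    proof (cases "finite F")
      case True
      then show ?thesis
        by (intro degree_sum_le) (auto intro: order_trans[OF degree_smult_le] simp: B_def degree_linear_power)
    qed simp
    then show ?thesis using m by linarith
  qed
  have Geq: "G t = (\<Sum>q<m. G (pts q) * poly (Lp pts m q) t)" if t: "t \<in> {u<..<v}" for t
  proof -
    have lag: "sum (\<lambda>i. a i * poly (B i) t) F = (\<Sum>q<m. sum (\<lambda>i. a i * poly (B i) (pts q)) F * poly (Lp pts m q) t)"
      if "finite F" for F
    proof -
      have "sum (\<lambda>i. a i * poly (B i) y) F = poly (\<Sum>i\<in>F. smult (a i) (B i)) y" for y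
        by (simp add: poly_sum)
      then show ?thesis using lagrange[OF inj degB[of F], of t] by simp
    qed
    have l1: "(sum (\<lambda>i. a i * poly (B i) t) \<longlongrightarrow> G t) (finite_subsets_at_top I)"
      using hsB[OF t] by (simp add: has_sum_def)
    have "((\<lambda>F. \<Sum>q<m. sum (\<lambda>i. a i * poly (B i) (pts q)) F * poly (Lp pts m q) t)
          \<longlongrightarrow> (\<Sum>q<m. G (pts q) * poly (Lp pts m q) t)) (finite_subsets_at_top I)"
    proof (intro tendsto_sum tendsto_mult_right)
      fix q assume "q \<in> {..<m}"
      then show "(sum (\<lambda>i. a i * poly (B i) (pts q)) \<longlongrightarrow> G (pts q)) (finite_subsets_at_top I)"
        using hsB[OF pts_in] by (simp add: has_sum_def)
    qed
    moreover have "eventually (\<lambda>F. (\<Sum>q<m. sum (\<lambda>i. a i * poly (B i) (pts q)) F * poly (Lp pts m q) t)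
        = sum (\<lambda>i. a i * poly (B i) t) F) (finite_subsets_at_top I)"
      by (rule eventually_finite_subsets_at_top_weakI) (simp add: lag)
    ultimately have l2: "(sum (\<lambda>i. a i * poly (B i) t) \<longlongrightarrow> (\<Sum>q<m. G (pts q) * poly (Lp pts m q) t)) (finite_subsets_at_top I)"
      by (rule Lim_transform_eventually)
    show ?thesis using tendsto_unique[OF finite_subsets_at_top_neq_bot l1 l2] .
  qed
  define P where "P = (\<Sum>q<m. smult (G (pts q)) (Lp pts m q))"
  have "s t = poly P t + a K * tpow (t - T K) (m - 1)" if t: "t \<in> {u<..<v}" for t
    using Geq[OF t] by (simp add: P_def poly_sum G_def)
  then show ?thesis unfolding u_def v_def by blast
qed


definition idx :: "nat \<Rightarrow> nat \<Rightarrow> int \<Rightarrow> nat \<Rightarrow> int" where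
  "idx m mt k j = (let l1 = int ((m + mt) div 2) in
      if int j < l1 then 2 * (k + 1 - l1 + int j)
      else if int j = l1 then 2 * k + 1
      else 2 * (k + int j - l1))"

lemma Xi_idx: "Xi m mt T1 k j = T1 (idx m mt k j)"
  by (simp add: Xi_def idx_def Let_def)

lemma idx_Suc: "idx m mt k j < idx m mt k (Suc j)"
  by (auto simp: idx_def Let_def)

lemma idx_mono: "strict_mono (idx m mt k)"
  using idx_Suc strict_mono_Suc_iff by blast

lemma Xi_mono: "strict_mono T1 \<Longrightarrow> strict_mono (Xi m mt T1 k)"
  unfolding strict_mono_Suc_iff Xi_idx using idx_Suc strict_mono_less by blast

lemma idx_l: "idx m mt k ((m + mt) div 2) = 2 * k + 1"
  by (simp add: idx_def Let_def)

lemma idx_other: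
  assumes "j \<noteq> (m + mt) div 2"
  shows "\<exists>q. idx m mt k j = 2 * q \<and> (j < (m + mt) div 2 \<longrightarrow> q \<le> k) \<and> ((m + mt) div 2 < j \<longrightarrow> k + 1 \<le> q)"
proof (cases "j < (m + mt) div 2")
  case True
  have "idx m mt k j = 2 * (k + 1 - int ((m + mt) div 2) + int j)" using True by (simp add: idx_def Let_def)
  moreover have "k + 1 - int ((m + mt) div 2) + int j \<le> k" using True by linarith
  ultimately show ?thesis using True by (intro exI[of _ "k + 1 - int ((m + mt) div 2) + int j"]) simp
next
  case False
  have "idx m mt k j = 2 * (k + int j - int ((m + mt) div 2))" using False assms by (simp add: idx_def Let_def)
  moreover have "k + 1 \<le> k + int j - int ((m + mt) div 2)" using False assms by linarith
  ultimately show ?thesis using False by (intro exI[of _ "k + int j - int ((m + mt) div 2)"]) simp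
qed

lemma idx_ne:
  assumes "\<not> (j = k \<and> i = (m + mt) div 2)"
  shows "idx m mt j i \<noteq> 2 * k + 1"
proof (cases "i = (m + mt) div 2")
  case True
  then show ?thesis using assms idx_l[of m mt j] by auto
next
  case False
  then obtain q where "idx m mt j i = 2 * q" using idx_other by blast
  then show ?thesis by presburger
qed

lemma T1_split:
  fixes T1 :: "int \<Rightarrow> real"
  assumes "strict_mono T1" "n \<noteq> 2 * k + 1"
  shows "T1 n \<le> T1 (2 * k) \<or> T1 (2 * k + 2) \<le> T1 n"
proof (cases "n \<le> 2 * k")
  case True then show ?thesis using assms(1) by (simp add: strict_mono_less_eq)
next
  case False
  then have "2 * k + 2 \<le> n" using assms(2) by simp
  then show ?thesis using assms(1) by (simp add: strict_mono_less_eq)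
qed

lemma jc_local:
  fixes f :: "real \<Rightarrow> real" and P :: "real poly"
  assumes "u < x" "x < v" "\<forall>t\<in>{u<..<v}. f t = poly P t + c * tpow (t - x) (m - 1)"
  shows "jump_coeff m f x = c"
  using jump_local[OF assms] by (simp add: jump_coeff_def)


theorem mainTheorem2:
  fixes m mt :: nat and T1 :: "int \<Rightarrow> real" and alpha :: "int \<Rightarrow> real"
    and N psi :: "int \<Rightarrow> real \<Rightarrow> real"
  assumes "m \<ge> 2" and "mt \<ge> 1" and "strict_mono T1"
    and "\<forall>k. alpha k \<noteq> 0"
    and "\<forall>k. is_bspline (m + mt) (Xi m mt T1 k) (N k)"
    and "\<forall>k t. psi k t = alpha k * (deriv ^^ mt) (N k) t"
  shows "(\<forall>k. jump_coeff m (psi k) (T1 (2 * k + 1)) \<noteq> 0 \<and>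
            (\<exists>\<sigma> \<in> spline_space m (\<lambda>i. T1 (2 * i)).
               \<forall>t. psi k t = \<sigma> t + jump_coeff m (psi k) (T1 (2 * k + 1)) * tpow (t - T1 (2 * k + 1)) (m - 1)))
       \<and> (\<forall>s1 s0 d a.
            s1 \<in> spline_space m T1 \<and> bounded {t. s1 t \<noteq> 0}
            \<and> s0 \<in> spline_space m (\<lambda>i. T1 (2 * i))
            \<and> finite {k. d k \<noteq> 0}
            \<and> (\<forall>t. s1 t = s0 t + (\<Sum>k\<in>{k. d k \<noteq> 0}. d k * psi k t))
            \<and> (\<forall>t. ((\<lambda>i. a i * tpow (t - T1 i) (m - 1)) has_sum s1 t) UNIV)
            \<longrightarrow> (\<forall>k. d k = a (2 * k + 1) / jump_coeff m (psi k) (T1 (2 * k + 1))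
                    \<and> a (2 * k + 1) = jump_coeff m s1 (T1 (2 * k + 1))))"
proof -
  note m2 = assms(1) and mt1 = assms(2) and sm = assms(3) and alpha = assms(4)
    and bs = assms(5) and psi_def = assms(6)
  define r where "r = m + mt"
  define l where "l = (m + mt) div 2"
  have r3: "r \<ge> 3" using m2 mt1 by (simp add: r_def)
  have l1: "1 \<le> l" "l < r" using m2 mt1 by (auto simp: l_def r_def)
  have psiE: "\<exists>e. psi k = TS {..r} e (Xi m mt T1 k) (m - 1) \<and> e l \<noteq> 0" for k
  proof -
    define xi where "xi = Xi m mt T1 k"
    have smx: "strict_mono xi" using Xi_mono[OF sm] by (simp add: xi_def)
    have bsk: "is_bspline r xi (N k)" using bs by (simp add: xi_def r_def)
    obtain c where c1: "\<forall>t. N k t = TS {..r} c xi (r - 1) t"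
      and c2: "(\<Sum>i\<in>{..r}. smult (c i) ([:-xi i, 1:] ^ (r - 1))) = 0"
      using bspline_rep[OF r3 smx bsk] by blast
    have Nk: "N k = TS {..r} c xi (r - 1)" using c1 by auto
    have rm: "r - 1 - mt = m - 1" using m2 by (simp add: r_def)
    have D: "(deriv ^^ mt) (N k) = TS {..r} (\<lambda>i. c i * (fact (r - 1) / fact (m - 1))) xi (m - 1)"
      unfolding Nk using TS_derivs[of mt "r - 1" "{..r}" c xi] m2 rm by (simp add: r_def)
    define e where "e i = alpha k * (c i * (fact (r - 1) / fact (m - 1)))" for i
    have pk: "psi k = TS {..r} e xi (m - 1)"
    proof
      fix t
      show "psi k t = TS {..r} e xi (m - 1) t"
        using psi_def D by (simp add: TS_def e_def sum_distrib_left mult.assoc)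
    qed
    have "c l \<noteq> 0"
    proof
      assume cl: "c l = 0"
      have "(\<Sum>i\<in>{..r}. smult (c i) ([:-xi i, 1:] ^ (r - 1))) =
          smult (c l) ([:-xi l, 1:] ^ (r - 1)) + (\<Sum>i\<in>{..r} - {l}. smult (c i) ([:-xi i, 1:] ^ (r - 1)))"
        by (rule sum.remove) (use l1 in auto)
      then have "(\<Sum>i\<in>{..r} - {l}. smult (c i) ([:-xi i, 1:] ^ (r - 1))) = 0"
        using c2 cl by simp
      moreover have "card ({..r} - {l}) \<le> Suc (r - 1)" using l1 by simp
      moreover have "inj_on xi ({..r} - {l})" using smx strict_mono_imp_inj_on by blast
      ultimately have "\<forall>i\<in>{..r} - {l}. c i = 0" by (intro lin_indep_powers) auto
      with cl have "\<forall>i\<in>{..r}. c i = 0" by blast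
      then have "\<forall>t. N k t = 0" using c1 by (simp add: TS_def)
      then show False using bsk by (simp add: is_bspline_def)
    qed
    then have "e l \<noteq> 0" using alpha by (simp add: e_def)
    then show ?thesis using pk xi_def by blast
  qed
  then obtain E where E: "\<And>k. psi k = TS {..r} (E k) (Xi m mt T1 k) (m - 1)" "\<And>k. E k l \<noteq> 0"
    by metis
  have Xl: "Xi m mt T1 k l = T1 (2 * k + 1)" for k by (simp add: Xi_idx l_def idx_l)
  have uv: "T1 (2 * k) < T1 (2 * k + 1)" "T1 (2 * k + 1) < T1 (2 * k + 2)" for k
    using sm by (auto simp: strict_mono_less)
  have loc: "\<exists>Pj. \<forall>t\<in>{T1 (2 * k)<..<T1 (2 * k + 2)}.
      psi j t = poly Pj t + (if j = k then E k l else 0) * tpow (t - T1 (2 * k + 1)) (m - 1)" for j k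
  proof -
    define S where "S = {..r} - {i. j = k \<and> i = l}"
    have knots: "\<forall>i\<in>S. Xi m mt T1 j i \<le> T1 (2 * k) \<or> T1 (2 * k + 2) \<le> Xi m mt T1 j i"
    proof
      fix i assume "i \<in> S"
      then have "idx m mt j i \<noteq> 2 * k + 1" by (intro idx_ne) (auto simp: S_def l_def)
      then show "Xi m mt T1 j i \<le> T1 (2 * k) \<or> T1 (2 * k + 2) \<le> Xi m mt T1 j i"
        unfolding Xi_idx by (rule T1_split[OF sm])
    qed
    obtain P where P: "\<forall>t\<in>{T1 (2 * k)<..T1 (2 * k + 2)}. TS S (E j) (Xi m mt T1 j) (m - 1) t = poly P t"
      using TS_local_poly[of S "Xi m mt T1 j" "T1 (2 * k)" "T1 (2 * k + 2)" "m - 1" "E j"] knots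
      by (auto simp: S_def)
    have split: "psi j t = TS S (E j) (Xi m mt T1 j) (m - 1) t
        + (if j = k then E k l else 0) * tpow (t - T1 (2 * k + 1)) (m - 1)" for t
    proof (cases "j = k")
      case True
      then have "S = {..r} - {l}" by (auto simp: S_def)
      then show ?thesis using True l1 E(1)[of j]
        by (simp add: TS_def sum.remove[of "{..r}" l] Xl)
    next
      case False
      then have "S = {..r}" by (auto simp: S_def)
      then show ?thesis using False E(1)[of j] by simp
    qed
    show ?thesis using P split by (intro exI[of _ P]) auto
  qed
  have gamma: "jump_coeff m (psi k) (T1 (2 * k + 1)) = E k l" for k
  proof -
    obtain P where "\<forall>t\<in>{T1 (2 * k)<..<T1 (2 * k + 2)}.
      psi k t = poly P t + E k l * tpow (t - T1 (2 * k + 1)) (m - 1)"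
      using loc[of k k] by auto
    then show ?thesis using jc_local uv by blast
  qed
  have part1: "jump_coeff m (psi k) (T1 (2 * k + 1)) \<noteq> 0 \<and>
            (\<exists>\<sigma> \<in> spline_space m (\<lambda>i. T1 (2 * i)).
               \<forall>t. psi k t = \<sigma> t + jump_coeff m (psi k) (T1 (2 * k + 1)) * tpow (t - T1 (2 * k + 1)) (m - 1))"
    for k
  proof
    show "jump_coeff m (psi k) (T1 (2 * k + 1)) \<noteq> 0" using gamma E(2) by simp
    define \<sigma> where "\<sigma> = TS ({..r} - {l}) (E k) (Xi m mt T1 k) (m - 1)"
    have eq0: "psi k t = \<sigma> t + E k l * tpow (t - T1 (2 * k + 1)) (m - 1)" for t
      using E(1)[of k] l1 by (simp add: \<sigma>_def TS_def sum.remove[of "{..r}" l] Xl)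
    have eq: "psi k t = \<sigma> t + jump_coeff m (psi k) (T1 (2 * k + 1)) * tpow (t - T1 (2 * k + 1)) (m - 1)" for t
      unfolding gamma by (rule eq0)
    have "\<sigma> \<in> spline_space m (\<lambda>i. T1 (2 * i))"
      unfolding spline_space_def
    proof safe
      have e2: "m - 1 - 1 = m - 2" by simp
      show "C_k (m - 2) \<sigma>"
        using TS_Ck[of "m - 1" "{..r} - {l}" "E k" "Xi m mt T1 k"] m2
        unfolding \<sigma>_def e2 by simp
    next
      fix i
      have knots: "\<forall>j\<in>{..r} - {l}. Xi m mt T1 k j \<le> T1 (2 * i) \<or> T1 (2 * (i + 1)) \<le> Xi m mt T1 k j"
      proof
        fix j assume "j \<in> {..r} - {l}"
        then obtain q where q: "idx m mt k j = 2 * q" using idx_other[of j m mt k] by (auto simp: l_def)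
        show "Xi m mt T1 k j \<le> T1 (2 * i) \<or> T1 (2 * (i + 1)) \<le> Xi m mt T1 k j"
        proof (cases "q \<le> i")
          case True then show ?thesis using sm by (simp add: Xi_idx q strict_mono_less_eq)
        next
          case False then show ?thesis using sm by (simp add: Xi_idx q strict_mono_less_eq)
        qed
      qed
      obtain P where "degree P \<le> m - 1"
        "\<forall>t\<in>{T1 (2 * i)<..T1 (2 * (i + 1))}. \<sigma> t = poly P t"
        using TS_local_poly[of "{..r} - {l}" "Xi m mt T1 k" "T1 (2 * i)" "T1 (2 * (i + 1))" "m - 1" "E k"] knots
        unfolding \<sigma>_def by auto
      then show "poly_on m {T1 (2 * i)<..T1 (2 * (i + 1))} \<sigma>"
        unfolding poly_on_def using m2 by (intro exI[of _ P]) auto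
    qed
    then show "\<exists>\<sigma> \<in> spline_space m (\<lambda>i. T1 (2 * i)).
               \<forall>t. psi k t = \<sigma> t + jump_coeff m (psi k) (T1 (2 * k + 1)) * tpow (t - T1 (2 * k + 1)) (m - 1)"
      using eq by blast
  qed
  have part2: "d k = a (2 * k + 1) / jump_coeff m (psi k) (T1 (2 * k + 1))
                    \<and> a (2 * k + 1) = jump_coeff m s1 (T1 (2 * k + 1))"
    if H: "s1 \<in> spline_space m T1" "s0 \<in> spline_space m (\<lambda>i. T1 (2 * i))"
       "finite {k. d k \<noteq> 0}" "\<forall>t. s1 t = s0 t + (\<Sum>k\<in>{k. d k \<noteq> 0}. d k * psi k t)"
       "\<forall>t. ((\<lambda>i. a i * tpow (t - T1 i) (m - 1)) has_sum s1 t) UNIV"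
    for s1 s0 d a k
  proof -
    define Dk where "Dk = {k. d k \<noteq> 0}"
    define x where "x = T1 (2 * k + 1)"
    define J where "J = {T1 (2 * k)<..<T1 (2 * k + 2)}"
    have "poly_on m {T1 (2 * k)<..T1 (2 * (k + 1))} s0" using H(2) by (simp add: spline_space_def)
    moreover have "2 * (k + 1) = 2 * k + 2" by simp
    ultimately have "poly_on m {T1 (2 * k)<..T1 (2 * k + 2)} s0" by simp
    then obtain P0 where "\<forall>t\<in>{T1 (2 * k)<..T1 (2 * k + 2)}. s0 t = poly P0 t"
      unfolding poly_on_def by blast
    then have P0: "\<forall>t\<in>J. s0 t = poly P0 t" by (auto simp: J_def)
    have "\<forall>j. \<exists>Pj. \<forall>t\<in>J. psi j t = poly Pj t + (if j = k then E k l else 0) * tpow (t - x) (m - 1)"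
      using loc unfolding J_def x_def by blast
    from choice[OF this] obtain PP where PP: "\<And>j. \<forall>t\<in>J. psi j t = poly (PP j) t + (if j = k then E k l else 0) * tpow (t - x) (m - 1)"
      by blast
    have s1loc: "\<forall>t\<in>J. s1 t = poly (P0 + (\<Sum>j\<in>Dk. smult (d j) (PP j))) t + (d k * E k l) * tpow (t - x) (m - 1)"
    proof
      fix t assume t: "t \<in> J"
      have "s1 t = s0 t + (\<Sum>j\<in>Dk. d j * psi j t)" using H(4) by (simp add: Dk_def)
      also have "\<dots> = poly P0 t + (\<Sum>j\<in>Dk. d j * poly (PP j) t
            + (if j = k then d k * E k l else 0) * tpow (t - x) (m - 1))"
      proof -
        have "d j * psi j t = d j * poly (PP j) t + (if j = k then d k * E k l else 0) * tpow (t - x) (m - 1)" for j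
        proof (cases "j = k")
          case True
          then show ?thesis using PP[of j] t by (simp add: distrib_left)
        next
          case False
          then show ?thesis using PP[of j] t by simp
        qed
        then show ?thesis using P0 t by simp
      qed
      also have "\<dots> = poly P0 t + (\<Sum>j\<in>Dk. d j * poly (PP j) t)
            + (\<Sum>j\<in>Dk. (if j = k then d k * E k l else 0)) * tpow (t - x) (m - 1)"
        by (simp add: sum.distrib sum_distrib_right)
      also have "(\<Sum>j\<in>Dk. (if j = k then d k * E k l else 0)) = d k * E k l"
        using H(3) by (simp add: Dk_def)
      finally show "s1 t = poly (P0 + (\<Sum>j\<in>Dk. smult (d j) (PP j))) t + (d k * E k l) * tpow (t - x) (m - 1)"
        by (simp add: poly_sum)
    qed
    have j1: "jump_coeff m s1 x = d k * E k l"
      using jc_local[of "T1 (2 * k)" x "T1 (2 * k + 2)"] s1loc uv unfolding J_def x_def by blast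
    obtain Q where Q: "\<forall>t\<in>{T1 (2 * k + 1 - 1)<..<T1 (2 * k + 1 + 1)}.
        s1 t = poly Q t + a (2 * k + 1) * tpow (t - T1 (2 * k + 1)) (m - 1)"
      using hassum_local[OF sm _ H(5), of "2 * k + 1"] m2 by auto
    have j2: "jump_coeff m s1 x = a (2 * k + 1)"
      using jc_local[of "T1 (2 * k)" x "T1 (2 * k + 2)" s1 Q "a (2 * k + 1)" m] Q uv
      unfolding x_def by (simp add: add.assoc)
    show ?thesis using j1 j2 gamma[of k] E(2)[of k] unfolding x_def by auto
  qed
  show ?thesis using part1 part2 by blast
qed

end
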